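(* Let $X\subseteq[0,1]$ be a union of intervals of the partition of $[0,1]$ into intervals of length $\delta$. Then $$\|1-\pi_\delta\|_{\mathrm{Var}(X)\to W(X)}\le\frac{\delta^2}8,$$ i.e. for every function $g$ of bounded variation supported in $X$, $\|(1-\pi_\delta)g\|_{W}\le\frac{\delta^2}{8}\mathrm{Var}_X(g)$.
   Context: $\pi_\delta$ is the Ulam projection (average on each interval of the partition of length $\delta$). For a finite union $Y$ of pairwise disjoint intervals $I_j$, $\mathrm{Var}_Y(f)=\sum_j\mathrm{Var}_{I_j}(f)$, where $\mathrm{Var}_I(f)=\sup\sum_i|f(x_{i+1})-f(x_i)|$ over finite increasing sequences in $I$. $W(Y)$ is the space of functions supported in $Y$ with zero average on each $I_j$, normed by $\|f\|_{W}=\|F\|_{L^1}$, $F(x)=\int_0^xf(t)\,dt$. *)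

theory Defs
  imports "HOL-Analysis.Analysis"
begin

text \<open>Partition of [0,1] into N intervals of length delta = 1/N.
  Cells are half-open [k/N,(k+1)/N), except the last one, which is closed.\<close>
definition ulam_cell :: "nat \<Rightarrow> nat \<Rightarrow> real set" where
  "ulam_cell N k = (if Suc k = N then {real k / real N .. 1}
                    else {real k / real N ..< real (Suc k) / real N})"

definition ulam_union :: "nat \<Rightarrow> nat set \<Rightarrow> real set" where
  "ulam_union N S = (\<Union>k\<in>S. ulam_cell N k)"

definition ulam_proj :: "nat \<Rightarrow> (real \<Rightarrow> real) \<Rightarrow> real \<Rightarrow> real" where
  "ulam_proj N g x = (\<Sum>k<N. indicator (ulam_cell N k) x *
        (real N * (LINT t:ulam_cell N k|lborel. g t)))"

definition var_sums :: "real set \<Rightarrow> (real \<Rightarrow> real) \<Rightarrow> real set" where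
  "var_sums I g = {\<Sum>i<n. \<bar>g (xs (Suc i)) - g (xs i)\<bar> | n xs.
        (\<forall>i\<le>n. xs i \<in> I) \<and> (\<forall>i<n. xs i < xs (Suc i))}"

definition var_on :: "real set \<Rightarrow> (real \<Rightarrow> real) \<Rightarrow> real" where
  "var_on I g = Sup (var_sums I g)"

definition bounded_var_on :: "real set \<Rightarrow> (real \<Rightarrow> real) \<Rightarrow> bool" where
  "bounded_var_on I g \<longleftrightarrow> bdd_above (var_sums I g)"

definition W_norm :: "(real \<Rightarrow> real) \<Rightarrow> real" where
  "W_norm f = (LINT x:{0..1}|lborel. \<bar>LINT t:{0..x}|lborel. f t\<bar>)"

end

theory Submission
  imports Defs
begin

lemma var_sums_zero: "a \<in> I \<Longrightarrow> 0 \<in> var_sums I g"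
  unfolding var_sums_def
  by (rule CollectI, rule exI[of _ 0], rule exI[of _ "\<lambda>_. a"]) auto

lemma var_sums_nonneg: "\<sigma> \<in> var_sums I g \<Longrightarrow> 0 \<le> \<sigma>"
  unfolding var_sums_def by (auto intro: sum_nonneg)

lemma var_sums_mono: "I \<subseteq> J \<Longrightarrow> var_sums I g \<subseteq> var_sums J g"
  unfolding var_sums_def by (intro Collect_mono impI) blast

lemma chain_le:
  fixes xs :: "nat \<Rightarrow> real"
  assumes "\<forall>i<n. xs i < xs (Suc i)" "i \<le> n"
  shows "xs i \<le> xs n"
  using assms
proof (induction n)
  case 0 then show ?case by simp
next
  case (Suc n)
  show ?case
  proof (cases "i = Suc n")
    case True then show ?thesis by simp
  next
    case False
    then have "xs i \<le> xs n" using Suc by auto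
    also have "xs n < xs (Suc n)" using Suc.prems by auto
    finally show ?thesis by simp
  qed
qed

lemma chain_mem:
  fixes xs :: "nat \<Rightarrow> real"
  assumes "\<forall>i\<le>n. xs i \<in> I" "\<forall>i<n. xs i < xs (Suc i)" "xs n \<le> t"
  shows "(\<Sum>i<n. \<bar>g (xs (Suc i)) - g (xs i)\<bar>) \<in> var_sums (I \<inter> {..t}) g"
proof -
  have "\<forall>i\<le>n. xs i \<in> I \<inter> {..t}"
    using assms chain_le[OF assms(2)] by (meson IntI atMost_iff order_trans)
  then show ?thesis unfolding var_sums_def using assms(2) by blast
qed

lemma chain_extend:
  fixes xs :: "nat \<Rightarrow> real"
  assumes "\<forall>i\<le>n. xs i \<in> I" "\<forall>i<n. xs i < xs (Suc i)" "t \<in> I" "xs n < t"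
  shows "\<exists>ys. (\<forall>i\<le>Suc n. ys i \<in> I) \<and> (\<forall>i<Suc n. ys i < ys (Suc i)) \<and> ys (Suc n) = t \<and>
     (\<Sum>i<Suc n. \<bar>g (ys (Suc i)) - g (ys i)\<bar>) = (\<Sum>i<n. \<bar>g (xs (Suc i)) - g (xs i)\<bar>) + \<bar>g t - g (xs n)\<bar>"
proof (intro exI conjI)
  define ys where "ys = xs(Suc n := t)"
  show "\<forall>i\<le>Suc n. ys i \<in> I" using assms by (auto simp: ys_def le_Suc_eq)
  show "\<forall>i<Suc n. ys i < ys (Suc i)" using assms by (auto simp: ys_def less_Suc_eq)
  show "ys (Suc n) = t" by (simp add: ys_def)
  have "(\<Sum>i<n. \<bar>g (ys (Suc i)) - g (ys i)\<bar>) = (\<Sum>i<n. \<bar>g (xs (Suc i)) - g (xs i)\<bar>)"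
    by (rule sum.cong) (auto simp: ys_def)
  then show "(\<Sum>i<Suc n. \<bar>g (ys (Suc i)) - g (ys i)\<bar>) = (\<Sum>i<n. \<bar>g (xs (Suc i)) - g (xs i)\<bar>) + \<bar>g t - g (xs n)\<bar>"
    by (simp add: ys_def)
qed

definition vfun :: "real set \<Rightarrow> (real \<Rightarrow> real) \<Rightarrow> real \<Rightarrow> real" where
  "vfun I g x = Sup (var_sums (I \<inter> {..x}) g)"

lemma vfun_step:
  assumes bdd: "bdd_above (var_sums I g)" and st: "s \<in> I" "t \<in> I" "s < t"
  shows "vfun I g s + \<bar>g t - g s\<bar> \<le> vfun I g t"
proof -
  have bt: "bdd_above (var_sums (I \<inter> {..t}) g)"
    by (rule bdd_above_mono[OF bdd var_sums_mono]) auto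
  have ne: "var_sums (I \<inter> {..s}) g \<noteq> {}" using var_sums_zero[of s "I \<inter> {..s}" g] st by auto
  have key: "\<sigma> \<le> vfun I g t - \<bar>g t - g s\<bar>" if "\<sigma> \<in> var_sums (I \<inter> {..s}) g" for \<sigma>
  proof -
    have "\<exists>n xs. \<sigma> = (\<Sum>i<n. \<bar>g (xs (Suc i)) - g (xs i)\<bar>) \<and> (\<forall>i\<le>n. xs i \<in> I \<inter> {..s}) \<and> (\<forall>i<n. xs i < xs (Suc i))"
      using that unfolding var_sums_def by (simp only: mem_Collect_eq)
    then obtain n xs where \<sigma>: "\<sigma> = (\<Sum>i<n. \<bar>g (xs (Suc i)) - g (xs i)\<bar>)"
      and c1: "\<forall>i\<le>n. xs i \<in> I \<inter> {..s}" and c2: "\<forall>i<n. xs i < xs (Suc i)"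
      by blast
    have c1': "\<forall>i\<le>n. xs i \<in> I" using c1 by auto
    have xn: "xs n \<le> s" using c1 by auto
    show ?thesis
    proof (cases "xs n = s")
      case True
      obtain ys where ys: "\<forall>i\<le>Suc n. ys i \<in> I" "\<forall>i<Suc n. ys i < ys (Suc i)" "ys (Suc n) = t"
        "(\<Sum>i<Suc n. \<bar>g (ys (Suc i)) - g (ys i)\<bar>) = \<sigma> + \<bar>g t - g s\<bar>"
        using chain_extend[OF c1' c2 st(2), of g] True st \<sigma> by auto
      have "\<sigma> + \<bar>g t - g s\<bar> \<in> var_sums (I \<inter> {..t}) g"
        using chain_mem[OF ys(1,2), of t g] ys by simp
      then have "\<sigma> + \<bar>g t - g s\<bar> \<le> vfun I g t"
        unfolding vfun_def using bt by (rule cSup_upper)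
      then show ?thesis by simp
    next
      case False
      then have xn': "xs n < s" using xn by simp
      obtain ys where ys: "\<forall>i\<le>Suc n. ys i \<in> I" "\<forall>i<Suc n. ys i < ys (Suc i)" "ys (Suc n) = s"
        "(\<Sum>i<Suc n. \<bar>g (ys (Suc i)) - g (ys i)\<bar>) = \<sigma> + \<bar>g s - g (xs n)\<bar>"
        using chain_extend[OF c1' c2 st(1) xn', of g] \<sigma> by auto
      obtain zs where zs: "\<forall>i\<le>Suc (Suc n). zs i \<in> I" "\<forall>i<Suc (Suc n). zs i < zs (Suc i)" "zs (Suc (Suc n)) = t"
        "(\<Sum>i<Suc (Suc n). \<bar>g (zs (Suc i)) - g (zs i)\<bar>) = (\<sigma> + \<bar>g s - g (xs n)\<bar>) + \<bar>g t - g s\<bar>"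
        using chain_extend[OF ys(1,2) st(2), of g] ys st by auto
      have "(\<sigma> + \<bar>g s - g (xs n)\<bar>) + \<bar>g t - g s\<bar> \<in> var_sums (I \<inter> {..t}) g"
        using chain_mem[OF zs(1,2), of t g] zs by simp
      then have "(\<sigma> + \<bar>g s - g (xs n)\<bar>) + \<bar>g t - g s\<bar> \<le> vfun I g t"
        unfolding vfun_def using bt by (rule cSup_upper)
      then show ?thesis by simp
    qed
  qed
  have "Sup (var_sums (I \<inter> {..s}) g) \<le> vfun I g t - \<bar>g t - g s\<bar>"
    using ne key by (rule cSup_least)
  then show ?thesis unfolding vfun_def[of I g s] by simp
qed

lemma vfun_nonneg:
  assumes bdd: "bdd_above (var_sums I g)" and "x \<in> I"
  shows "0 \<le> vfun I g x"
proof -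
  have "bdd_above (var_sums (I \<inter> {..x}) g)"
    by (rule bdd_above_mono[OF bdd var_sums_mono]) auto
  moreover have "0 \<in> var_sums (I \<inter> {..x}) g" using assms by (intro var_sums_zero) auto
  ultimately show ?thesis unfolding vfun_def by (intro cSup_upper)
qed

lemma vfun_le:
  assumes bdd: "bdd_above (var_sums I g)" and "x \<in> I"
  shows "vfun I g x \<le> var_on I g"
  unfolding vfun_def var_on_def
  by (rule cSup_subset_mono) (use assms var_sums_zero[of x "I \<inter> {..x}" g] var_sums_mono in auto)

lemma var_on_nonneg:
  assumes bdd: "bdd_above (var_sums I g)" and "x \<in> I"
  shows "0 \<le> var_on I g"
  using vfun_nonneg[OF assms] vfun_le[OF assms] by linarith

lemma vfun_mono_plus:
  assumes bdd: "bdd_above (var_sums I g)"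
  shows "mono_on I (\<lambda>x. vfun I g x + g x)"
proof (rule mono_onI)
  fix r s assume "r \<in> I" "s \<in> I" "r \<le> s"
  then show "vfun I g r + g r \<le> vfun I g s + g s"
    using vfun_step[OF bdd, of r s] by (cases "r = s") auto
qed

lemma vfun_mono_minus:
  assumes bdd: "bdd_above (var_sums I g)"
  shows "mono_on I (\<lambda>x. vfun I g x - g x)"
proof (rule mono_onI)
  fix r s assume "r \<in> I" "s \<in> I" "r \<le> s"
  then show "vfun I g r - g r \<le> vfun I g s - g s"
    using vfun_step[OF bdd, of r s] by (cases "r = s") auto
qed

lemma var_diff_bound:
  assumes bdd: "bdd_above (var_sums I g)" and "x \<in> I" "y \<in> I"
  shows "\<bar>g y - g x\<bar> \<le> var_on I g"
proof (cases x y rule: linorder_cases)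
  case less
  then show ?thesis using vfun_step[OF bdd assms(2,3)] vfun_nonneg[OF bdd assms(2)] vfun_le[OF bdd assms(3)] by linarith
next
  case equal
  then show ?thesis using var_on_nonneg[OF bdd assms(2)] by simp
next
  case greater
  then show ?thesis using vfun_step[OF bdd assms(3,2)] vfun_nonneg[OF bdd assms(3)] vfun_le[OF bdd assms(2)] by linarith
qed

lemma int_const: "a \<le> b \<Longrightarrow> integral {a..b} (\<lambda>x. c) = (b - a) * (c::real)"
  by simp

lemma mono_integrable_ico:
  fixes p :: "real \<Rightarrow> real"
  assumes mono: "mono_on {a..<b} p" and bnd: "\<And>x. x \<in> {a..<b} \<Longrightarrow> p x \<le> C"
  shows "p integrable_on {a..b}"
proof -
  define p' where "p' x = (if x < b then p x else max C (p a))" for x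
  have "mono_on {a..b} p'"
  proof (rule mono_onI)
    fix r s assume rs: "r \<in> {a..b}" "s \<in> {a..b}" "r \<le> s"
    show "p' r \<le> p' s"
    proof (cases "s < b")
      case True
      then show ?thesis using rs mono by (auto simp: p'_def intro: mono_onD)
    next
      case False
      then show ?thesis using rs bnd by (auto simp: p'_def)
    qed
  qed
  then have "p' integrable_on {a..b}" by (rule integrable_on_mono_on)
  then show ?thesis
    by (rule integrable_spike[where S="{b}"]) (auto simp: p'_def)
qed

lemma mono_avg:
  fixes p :: "real \<Rightarrow> real"
  assumes mono: "mono_on {a..<b} p" and int: "p integrable_on {a..b}" and x: "a \<le> x" "x \<le> b"
  shows "(b - a) * integral {a..x} p \<le> (x - a) * integral {a..b} p"
proof (cases "x = b")
  case True then show ?thesis by simp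
next
  case False
  then have xb: "x < b" using x by simp
  have i1: "p integrable_on {a..x}" "p integrable_on {x..b}"
    using int x by (auto intro: integrable_subinterval_real)
  have A: "integral {a..x} p \<le> (x - a) * p x"
  proof -
    have "integral {a..x} p \<le> integral {a..x} (\<lambda>_. p x)"
      by (rule integral_le[OF i1(1)]) (use x xb mono in \<open>auto intro: mono_onD\<close>)
    then show ?thesis using x by simp
  qed
  have B: "(b - x) * p x \<le> integral {x..b} p"
  proof -
    define q where "q t = (if t = b then p x else p t)" for t
    have qi: "q integrable_on {x..b}"
      by (rule integrable_spike[OF i1(2), where S="{b}"]) (auto simp: q_def)
    have "integral {x..b} p = integral {x..b} q"
      by (rule integral_spike[where S="{b}"]) (auto simp: q_def)
    moreover have "integral {x..b} (\<lambda>_. p x) \<le> integral {x..b} q"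
      by (rule integral_le[OF _ qi]) (use x xb mono in \<open>auto simp: q_def intro: mono_onD\<close>)
    ultimately show ?thesis using xb by simp
  qed
  have C: "integral {a..x} p + integral {x..b} p = integral {a..b} p"
    using x int by (intro Henstock_Kurzweil_Integration.integral_combine) auto
  have D1: "(b - x) * integral {a..x} p \<le> (b - x) * ((x - a) * p x)"
    using A xb by (intro mult_left_mono) auto
  have D2: "(x - a) * ((b - x) * p x) \<le> (x - a) * integral {x..b} p"
    using B x by (intro mult_left_mono) auto
  have "(b - a) * integral {a..x} p = (x - a) * integral {a..x} p + (b - x) * integral {a..x} p"
    by (simp add: algebra_simps)
  also have "\<dots> \<le> (x - a) * integral {a..x} p + (x - a) * integral {x..b} p"
    using D1 D2 by (simp add: algebra_simps)
  also have "\<dots> = (x - a) * integral {a..b} p"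
    by (subst C[symmetric]) (simp add: distrib_left)
  finally show ?thesis .
qed

lemma int_lin1:
  fixes a c C :: real
  assumes "a \<le> c"
  shows "integral {a..c} (\<lambda>x. (x - a) * C) = C * (c - a)^2 / 2"
proof -
  have "((\<lambda>x. (x - a) * C) has_integral ((\<lambda>x. C * (x - a)^2 / 2) c - (\<lambda>x. C * (x - a)^2 / 2) a)) {a..c}"
    by (rule fundamental_theorem_of_calculus[OF assms])
       (auto intro!: derivative_eq_intros simp: has_real_derivative_iff_has_vector_derivative[symmetric] field_simps)
  then show ?thesis by (intro integral_unique) simp
qed

lemma int_lin2:
  fixes b c C :: real
  assumes "c \<le> b"
  shows "integral {c..b} (\<lambda>x. (b - x) * C) = C * (b - c)^2 / 2"
proof -
  have "((\<lambda>x. (b - x) * C) has_integral ((\<lambda>x. - C * (b - x)^2 / 2) b - (\<lambda>x. - C * (b - x)^2 / 2) c)) {c..b}"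
    by (rule fundamental_theorem_of_calculus[OF assms])
       (auto intro!: derivative_eq_intros simp: has_real_derivative_iff_has_vector_derivative[symmetric] field_simps)
  then show ?thesis by (intro integral_unique) simp
qed

lemma cell_core:
  fixes g V :: "real \<Rightarrow> real" and a b K :: real
  assumes ab: "a < b"
    and mp: "mono_on {a..<b} (\<lambda>x. V x + g x)" and mm: "mono_on {a..<b} (\<lambda>x. V x - g x)"
    and V0: "\<And>x. x \<in> {a..b} \<Longrightarrow> 0 \<le> V x" and VK: "\<And>x. x \<in> {a..b} \<Longrightarrow> V x \<le> K"
  shows "integral {a..b} (\<lambda>x. \<bar>integral {a..x} (\<lambda>t. g t - integral {a..b} g / (b - a))\<bar>)
           \<le> (b - a)^2 / 8 * K"
proof -
  define \<delta> where "\<delta> = b - a"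
  have \<delta>0: "\<delta> > 0" using ab by (simp add: \<delta>_def)
  define m where "m = integral {a..b} g / (b - a)"
  have ga: "g x \<le> K + g a" if "x \<in> {a..<b}" for x
    using mono_onD[OF mm, of a x] that V0[of a] VK[of x] ab by auto
  have ga': "g a - K \<le> g x" if "x \<in> {a..<b}" for x
    using mono_onD[OF mp, of a x] that V0[of a] VK[of x] ab by auto
  have pint: "(\<lambda>x. V x + g x) integrable_on {a..b}"
    by (rule mono_integrable_ico[OF mp, where C="2 * K + g a"]) (use ga VK in force)
  have qint: "(\<lambda>x. V x - g x) integrable_on {a..b}"
    by (rule mono_integrable_ico[OF mm, where C="2 * K - g a"]) (use ga' VK in force)
  have gint: "g integrable_on {a..b}"
  proof -
    have "(\<lambda>x. (1/2) * ((V x + g x) - (V x - g x))) integrable_on {a..b}"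
      using integrable_on_cmult_left[OF integrable_diff[OF pint qint], of "1/2"] by simp
    then show ?thesis by simp
  qed
  have Vint: "V integrable_on {a..b}"
  proof -
    have "(\<lambda>x. (1/2) * ((V x + g x) + (V x - g x))) integrable_on {a..b}"
      using integrable_on_cmult_left[OF integrable_add[OF pint qint], of "1/2"] by simp
    then show ?thesis by simp
  qed
  define JV where "JV = integral {a..b} V"
  define F where "F x = integral {a..x} (\<lambda>t. g t - m)" for x
  have bound: "\<bar>F x\<bar> \<le> (x - a) * JV / \<delta> \<and> \<bar>F x\<bar> \<le> (b - x) * (\<delta> * K - JV) / \<delta>"
    if x: "a \<le> x" "x \<le> b" for x
  proof -
    have gx: "g integrable_on {a..x}" "V integrable_on {a..x}" "g integrable_on {x..b}" "V integrable_on {x..b}"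
      using gint Vint x by (auto intro: integrable_subinterval_real)
    have P: "(b - a) * integral {a..x} (\<lambda>x. V x + g x) \<le> (x - a) * integral {a..b} (\<lambda>x. V x + g x)"
      by (rule mono_avg[OF mp pint x])
    have Q: "(b - a) * integral {a..x} (\<lambda>x. V x - g x) \<le> (x - a) * integral {a..b} (\<lambda>x. V x - g x)"
      by (rule mono_avg[OF mm qint x])
    have e1: "integral {a..x} (\<lambda>x. V x + g x) = integral {a..x} V + integral {a..x} g"
      using gx by (simp add: integral_add)
    have e2: "integral {a..x} (\<lambda>x. V x - g x) = integral {a..x} V - integral {a..x} g"
      using gx by (simp add: integral_diff)
    have e3: "integral {a..b} (\<lambda>x. V x + g x) = JV + integral {a..b} g"
      using gint Vint by (simp add: integral_add JV_def)
    have e4: "integral {a..b} (\<lambda>x. V x - g x) = JV - integral {a..b} g"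
      using gint Vint by (simp add: integral_diff JV_def)
    define G where "G = \<delta> * integral {a..x} g - (x - a) * integral {a..b} g"
    define W where "W = \<delta> * integral {a..x} V - (x - a) * JV"
    have WG1: "W + G \<le> 0" using P unfolding e1 e3 W_def G_def \<delta>_def by (simp add: algebra_simps)
    have WG2: "W - G \<le> 0" using Q unfolding e2 e4 W_def G_def \<delta>_def by (simp add: algebra_simps)
    have FG: "F x = G / \<delta>"
    proof -
      have "F x = integral {a..x} g - integral {a..x} (\<lambda>_. m)"
        unfolding F_def by (rule integral_diff[OF gx(1)]) auto
      also have "\<dots> = integral {a..x} g - (x - a) * m" using x by simp
      finally show ?thesis unfolding G_def m_def \<delta>_def using \<delta>0 \<delta>_def by (simp add: field_simps)
    qed
    have Vax: "0 \<le> integral {a..x} V"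
      by (rule integral_nonneg[OF gx(2)]) (use x V0 in auto)
    have Vxb: "integral {x..b} V \<le> (b - x) * K"
    proof -
      have "integral {x..b} V \<le> integral {x..b} (\<lambda>_. K)"
        by (rule integral_le[OF gx(4)]) (use x VK in auto)
      then show ?thesis using x by simp
    qed
    have comb: "integral {a..x} V + integral {x..b} V = JV"
      unfolding JV_def using x Vint by (intro Henstock_Kurzweil_Integration.integral_combine) auto
    have absG: "\<bar>G\<bar> \<le> - W" using WG1 WG2 by linarith
    have W1: "- W \<le> (x - a) * JV" unfolding W_def using Vax \<delta>0 by simp
    have W2: "- W \<le> (b - x) * (\<delta> * K - JV)"
    proof -
      have "- W = \<delta> * integral {x..b} V - (b - x) * JV"
        unfolding W_def by (simp add: comb[symmetric] \<delta>_def algebra_simps)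
      also have "\<dots> \<le> \<delta> * ((b - x) * K) - (b - x) * JV"
        using Vxb \<delta>0 by simp
      finally show ?thesis by (simp add: algebra_simps)
    qed
    have "\<bar>F x\<bar> = \<bar>G\<bar> / \<delta>" using FG \<delta>0 by simp
    then show ?thesis using absG W1 W2 \<delta>0 by (auto simp: divide_right_mono)
  qed
  define c where "c = (a + b) / 2"
  have c: "a \<le> c" "c \<le> b" using ab by (auto simp: c_def)
  have Fcont: "continuous_on {a..b} (\<lambda>x. \<bar>F x\<bar>)"
  proof -
    have "(\<lambda>t. g t - m) integrable_on {a..b}" by (rule integrable_diff[OF gint]) auto
    then have "continuous_on {a..b} F" unfolding F_def by (rule indefinite_integral_continuous_1)
    then show ?thesis by (intro continuous_intros)
  qed
  have Fint: "(\<lambda>x. \<bar>F x\<bar>) integrable_on {a..b}" using Fcont by (rule integrable_continuous_interval)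
  have Fint1: "(\<lambda>x. \<bar>F x\<bar>) integrable_on {a..c}" "(\<lambda>x. \<bar>F x\<bar>) integrable_on {c..b}"
    using Fint c by (auto intro: integrable_subinterval_real)
  have I1: "integral {a..c} (\<lambda>x. \<bar>F x\<bar>) \<le> integral {a..c} (\<lambda>x. (x - a) * (JV / \<delta>))"
    by (rule integral_le[OF Fint1(1) integrable_continuous_interval]) (use bound c \<delta>0 in \<open>auto intro!: continuous_intros\<close>)
  have I2: "integral {c..b} (\<lambda>x. \<bar>F x\<bar>) \<le> integral {c..b} (\<lambda>x. (b - x) * ((\<delta> * K - JV) / \<delta>))"
    by (rule integral_le[OF Fint1(2) integrable_continuous_interval]) (use bound c \<delta>0 in \<open>auto intro!: continuous_intros\<close>)
  have "integral {a..b} (\<lambda>x. \<bar>F x\<bar>) = integral {a..c} (\<lambda>x. \<bar>F x\<bar>) + integral {c..b} (\<lambda>x. \<bar>F x\<bar>)"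
    using c Fint by (intro Henstock_Kurzweil_Integration.integral_combine[symmetric]) auto
  also have "\<dots> \<le> (JV / \<delta>) * (c - a)^2 / 2 + ((\<delta> * K - JV) / \<delta>) * (b - c)^2 / 2"
    using I1 I2 int_lin1[OF c(1), of "JV / \<delta>"] int_lin2[OF c(2), of "(\<delta> * K - JV) / \<delta>"] by linarith
  also have "\<dots> = \<delta>^2 / 8 * K"
  proof -
    have h: "c - a = \<delta> / 2" "b - c = \<delta> / 2" unfolding c_def \<delta>_def by (simp_all add: field_simps)
    show ?thesis unfolding h using \<delta>0 by (simp add: field_simps power2_eq_square)
  qed
  finally show ?thesis unfolding F_def m_def \<delta>_def .
qed

lemma cell_bounds:
  assumes N: "N > 0" and k: "k < N" and x: "x \<in> ulam_cell N k"
  shows "real k / real N \<le> x" "x \<le> real (Suc k) / real N"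
proof -
  show "real k / real N \<le> x" using x by (auto simp: ulam_cell_def split: if_splits)
  show "x \<le> real (Suc k) / real N"
  proof (cases "Suc k = N")
    case True
    then have "real (Suc k) / real N = 1" using N by simp
    then show ?thesis using x True by (auto simp: ulam_cell_def)
  next
    case False
    then show ?thesis using x by (auto simp: ulam_cell_def)
  qed
qed

lemma cell_ico:
  assumes N: "N > 0" and k: "k < N" and x: "real k / real N \<le> x" "x < real (Suc k) / real N"
  shows "x \<in> ulam_cell N k"
proof (cases "Suc k = N")
  case True
  then have "real (Suc k) / real N = 1" using N by simp
  then show ?thesis using x True by (auto simp: ulam_cell_def)
next
  case False
  then show ?thesis using x by (auto simp: ulam_cell_def)
qed

lemma cell_left:
  assumes N: "N > 0" and k: "k < N"
  shows "real k / real N \<in> ulam_cell N k"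
  using N k by (intro cell_ico) (auto simp: divide_strict_right_mono)

lemma cell_not_last:
  assumes N: "N > 0" and x: "x \<in> ulam_cell N k" and k: "Suc k \<noteq> N"
  shows "x < real (Suc k) / real N"
  using x k by (auto simp: ulam_cell_def)

lemma cell_disj:
  assumes N: "N > 0" and jk: "j < N" "k < N" "j \<noteq> k" and x: "x \<in> ulam_cell N j" "x \<in> ulam_cell N k"
  shows False
proof -
  have *: False if "j' < k'" "k' < N" "x \<in> ulam_cell N j'" "x \<in> ulam_cell N k'" for j' k'
  proof -
    have "x < real (Suc j') / real N" using cell_not_last[OF N that(3)] that by auto
    also have "\<dots> \<le> real k' / real N" using that N by (intro divide_right_mono) auto
    also have "\<dots> \<le> x" using cell_bounds[OF N that(2,4)] by simp
    finally show False by simp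
  qed
  show False
  proof (cases "j < k")
    case True then show ?thesis using * jk x by blast
  next
    case False then have "k < j" using jk by simp
    then show ?thesis using * jk x by blast
  qed
qed

lemma cell_borel: "ulam_cell N k \<in> sets borel"
  by (simp add: ulam_cell_def)

lemma cell_Icc_integral:
  fixes h :: "real \<Rightarrow> real"
  assumes N: "N > 0" and k: "k < N"
  shows "integral (ulam_cell N k) h = integral {real k / real N .. real (Suc k) / real N} h"
proof (rule integral_spike_set)
  have "ulam_cell N k \<subseteq> {real k / real N .. real (Suc k) / real N}"
    using cell_bounds[OF N k] by auto
  then have "{x \<in> ulam_cell N k - {real k / real N..real (Suc k) / real N}. h x \<noteq> 0} = {}"
    by blast
  then show "negligible {x \<in> ulam_cell N k - {real k / real N..real (Suc k) / real N}. h x \<noteq> 0}"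
    by (simp only:) simp
  have "{real k / real N..real (Suc k) / real N} - ulam_cell N k \<subseteq> {real (Suc k) / real N}"
    using cell_ico[OF N k] by fastforce
  then show "negligible {x \<in> {real k / real N..real (Suc k) / real N} - ulam_cell N k. h x \<noteq> 0}"
    by (intro negligible_subset[OF negligible_sing[of "real (Suc k) / real N"]]) blast
qed

lemma proj_on_cell:
  assumes N: "N > 0" and k: "k < N" and x: "x \<in> ulam_cell N k"
  shows "ulam_proj N g x = real N * (LINT t:ulam_cell N k|lborel. g t)"
proof -
  have "ulam_proj N g x = (\<Sum>j\<in>{..<N}. indicator (ulam_cell N j) x *
        (real N * (LINT t:ulam_cell N j|lborel. g t)))" by (simp add: ulam_proj_def)
  also have "\<dots> = (\<Sum>j\<in>{k}. indicator (ulam_cell N j) x *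
        (real N * (LINT t:ulam_cell N j|lborel. g t)))"
    by (rule sum.mono_neutral_left[symmetric]) (use cell_disj[OF N _ k _ _ x] k in \<open>auto simp: indicator_def\<close>)
  finally show ?thesis using x by simp
qed

lemma g_meas_cell:
  assumes bdd: "bdd_above (var_sums I g)" and I: "I \<in> sets borel"
  shows "(\<lambda>x. indicator I x *\<^sub>R g x) \<in> borel_measurable borel"
proof -
  have p: "(\<lambda>x. vfun I g x + g x) \<in> borel_measurable (restrict_space borel I)"
    by (rule borel_measurable_mono_on_fnc[OF vfun_mono_plus[OF bdd]])
  have q: "(\<lambda>x. vfun I g x - g x) \<in> borel_measurable (restrict_space borel I)"
    by (rule borel_measurable_mono_on_fnc[OF vfun_mono_minus[OF bdd]])
  have "(\<lambda>x. (1/2) * ((vfun I g x + g x) - (vfun I g x - g x))) \<in> borel_measurable (restrict_space borel I)"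
    by (intro borel_measurable_times borel_measurable_const borel_measurable_diff p q)
  moreover have "(\<lambda>x. (1/2) * ((vfun I g x + g x) - (vfun I g x - g x))) = g"
    by (rule ext) (simp add: algebra_simps)
  ultimately have "g \<in> borel_measurable (restrict_space borel I)" by simp
  then show ?thesis using I by (subst borel_measurable_restrict_space_iff[symmetric]) auto
qed

lemma set_int_bounded:
  fixes h :: "real \<Rightarrow> real"
  assumes h: "h \<in> borel_measurable borel" and B: "\<And>x. \<bar>h x\<bar> \<le> B"
    and A: "A \<in> sets borel" "A \<subseteq> {c..d}"
  shows "set_integrable lborel A h"
  unfolding set_integrable_def
proof (rule integrableI_bounded_set_indicator[where B=B])
  show "A \<in> sets lborel" using A by simp
  show "h \<in> borel_measurable lborel" using h by simp
  have "emeasure lborel A \<le> emeasure lborel {c..d}" using A by (intro emeasure_mono) auto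
  also have "\<dots> < \<infinity>" by (simp add: emeasure_lborel_Icc_eq)
  finally show "emeasure lborel A < \<infinity>" .
  show "AE x in lborel. x \<in> A \<longrightarrow> norm (h x) \<le> B" using B by simp
qed

lemma sum_cells:
  fixes h :: "real \<Rightarrow> real"
  assumes N: "N > 0" and h: "h integrable_on {0..1}" and n: "n \<le> N"
  shows "integral {0..real n / real N} h = (\<Sum>k<n. integral {real k / real N..real (Suc k) / real N} h)"
  using n
proof (induction n)
  case 0 then show ?case by simp
next
  case (Suc n)
  have le1: "real (Suc n) / real N \<le> 1" using Suc.prems N by simp
  have hi: "h integrable_on {0..real (Suc n) / real N}"
    by (rule integrable_subinterval_real[OF h]) (use le1 in auto)
  have "integral {0..real (Suc n) / real N} h
      = integral {0..real n / real N} h + integral {real n / real N..real (Suc n) / real N} h"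
    by (rule Henstock_Kurzweil_Integration.integral_combine[symmetric]) (use hi N in \<open>auto simp: divide_right_mono\<close>)
  then show ?case using Suc by simp
qed

theorem lemma79:
  fixes N :: nat and S :: "nat set" and g :: "real \<Rightarrow> real"
  assumes "N > 0"
    and "S \<subseteq> {..<N}"
    and "\<forall>x. x \<notin> ulam_union N S \<longrightarrow> g x = 0"
    and "\<forall>k\<in>S. bounded_var_on (ulam_cell N k) g"
  shows "W_norm (\<lambda>x. g x - ulam_proj N g x)
           \<le> (1 / real N)^2 / 8 * (\<Sum>k\<in>S. var_on (ulam_cell N k) g)"
proof -
  note N = assms(1)
  define a where "a k = real k / real N" for k
  have bddk: "bdd_above (var_sums (ulam_cell N k) g)" if "k \<in> S" for k
    using assms(4) that by (simp add: bounded_var_on_def)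
  have kN: "k < N" if "k \<in> S" for k using assms(2) that by auto
  have finS: "finite S" using assms(2) finite_subset by blast
  have varnn: "0 \<le> var_on (ulam_cell N k) g" if "k \<in> S" for k
    using var_on_nonneg[OF bddk[OF that] cell_left[OF N kN[OF that]]] .
  have ak_cell: "a k \<in> ulam_cell N k" if "k < N" for k
    using cell_left[OF N that] by (simp add: a_def)
  have ico_cell: "x \<in> ulam_cell N k" if "k < N" "a k \<le> x" "x < a (Suc k)" for k x
    using cell_ico[OF N that(1)] that by (simp add: a_def)
  have cell_icc: "ulam_cell N k \<subseteq> {a k..a (Suc k)}" if "k < N" for k
    using cell_bounds[OF N that] by (auto simp: a_def)
  have adiff: "a (Suc k) - a k = 1 / real N" for k
    by (simp add: a_def add_divide_distrib)
  have apos: "a k < a (Suc k)" for k using adiff N by (simp add: algebra_simps) 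
  have a0: "a 0 = 0" by (simp add: a_def)
  have aN: "a N = 1" using N by (simp add: a_def)
  have amono: "a j \<le> a k" if "j \<le> k" for j k
    using that N by (simp add: a_def divide_right_mono)
  have gz: "g x = 0" if "k < N" "k \<notin> S" "x \<in> ulam_cell N k" for k x
  proof -
    have "x \<notin> ulam_union N S"
    proof
      assume "x \<in> ulam_union N S"
      then obtain j where "j \<in> S" "x \<in> ulam_cell N j" by (auto simp: ulam_union_def)
      then show False using cell_disj[OF N kN[of j] that(1) _ _ that(3)] that(2) by auto
    qed
    then show ?thesis using assms(3) by blast
  qed
  have geq: "g = (\<lambda>x. \<Sum>k\<in>S. indicator (ulam_cell N k) x *\<^sub>R g x)"
  proof (rule ext)
    fix x show "g x = (\<Sum>k\<in>S. indicator (ulam_cell N k) x *\<^sub>R g x)"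
    proof (cases "x \<in> ulam_union N S")
      case True
      then obtain k where k: "k \<in> S" "x \<in> ulam_cell N k" by (auto simp: ulam_union_def)
      have "(\<Sum>j\<in>S. indicator (ulam_cell N j) x *\<^sub>R g x) = (\<Sum>j\<in>{k}. indicator (ulam_cell N j) x *\<^sub>R g x)"
        by (rule sum.mono_neutral_left[symmetric])
           (use finS k cell_disj[OF N _ kN[OF k(1)] _ _ k(2)] kN in \<open>auto simp: indicator_def\<close>)
      then show ?thesis using k by simp
    next
      case False
      then have "indicator (ulam_cell N k) x = (0::real)" if "k \<in> S" for k
        using that by (auto simp: ulam_union_def indicator_def)
      then show ?thesis using False assms(3) by simp
    qed
  qed
  have gmeas: "g \<in> borel_measurable borel"
    by (subst geq) (intro borel_measurable_sum g_meas_cell bddk cell_borel)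
  define Cg where "Cg = (\<Sum>k\<in>S. \<bar>g (a k)\<bar> + var_on (ulam_cell N k) g)"
  have Cg0: "0 \<le> Cg" unfolding Cg_def by (intro sum_nonneg) (use varnn in force)
  have gbound: "\<bar>g x\<bar> \<le> Cg" for x
  proof (cases "x \<in> ulam_union N S")
    case True
    then obtain k where k: "k \<in> S" "x \<in> ulam_cell N k" by (auto simp: ulam_union_def)
    have "\<bar>g x\<bar> \<le> \<bar>g (a k)\<bar> + var_on (ulam_cell N k) g"
      using var_diff_bound[OF bddk[OF k(1)] ak_cell[OF kN[OF k(1)]] k(2)] by linarith
    also have "\<dots> \<le> Cg" unfolding Cg_def
      by (rule member_le_sum) (use k finS varnn in force)+
    finally show ?thesis .
  next
    case False
    then have "g x = 0" using assms(3) by simp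
    then show ?thesis using Cg0 by simp
  qed
  have gI: "g integrable_on {c..d}" for c d
    using set_borel_integral_eq_integral(1)[OF set_int_bounded[OF gmeas gbound, of "{c..d}" c d]] by simp
  have gint_cell: "set_integrable lborel (ulam_cell N k) g" if "k < N" for k
    by (rule set_int_bounded[OF gmeas gbound cell_borel cell_icc[OF that]])
  define m where "m k = real N * (LINT t:ulam_cell N k|lborel. g t)" for k
  have m_eq: "m k = integral {a k..a (Suc k)} g / (a (Suc k) - a k)" if "k < N" for k
  proof -
    have "(LINT t:ulam_cell N k|lborel. g t) = integral (ulam_cell N k) g"
      by (rule set_borel_integral_eq_integral(2)[OF gint_cell[OF that]])
    also have "\<dots> = integral {a k..a (Suc k)} g" unfolding a_def by (rule cell_Icc_integral[OF N that])
    finally show ?thesis unfolding m_def adiff using N by simp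
  qed
  have proj_cell: "ulam_proj N g x = m k" if "k < N" "x \<in> ulam_cell N k" for k x
    using proj_on_cell[OF N that] by (simp add: m_def)
  define f where "f = (\<lambda>x. g x - ulam_proj N g x)"
  have proj_meas: "ulam_proj N g \<in> borel_measurable borel"
    unfolding ulam_proj_def
    by (intro borel_measurable_sum borel_measurable_times borel_measurable_indicator cell_borel borel_measurable_const)
  define Bp where "Bp = (\<Sum>k<N. \<bar>m k\<bar>)"
  have proj_bound: "\<bar>ulam_proj N g x\<bar> \<le> Bp" for x
  proof -
    have "\<bar>ulam_proj N g x\<bar> = \<bar>\<Sum>k<N. indicator (ulam_cell N k) x * m k\<bar>"
      by (simp add: ulam_proj_def m_def)
    also have "\<dots> \<le> (\<Sum>k<N. \<bar>indicator (ulam_cell N k) x * m k\<bar>)" by (rule sum_abs)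
    also have "\<dots> \<le> Bp" unfolding Bp_def
      by (rule sum_mono) (simp add: indicator_def abs_mult)
    finally show ?thesis .
  qed
  have fmeas: "f \<in> borel_measurable borel"
    unfolding f_def using gmeas proj_meas by (intro borel_measurable_diff)
  have fbound: "\<bar>f x\<bar> \<le> Cg + Bp" for x
  proof -
    have "\<bar>g x - ulam_proj N g x\<bar> \<le> \<bar>g x\<bar> + \<bar>ulam_proj N g x\<bar>" by (rule abs_triangle_ineq4)
    then show ?thesis using gbound[of x] proj_bound[of x] unfolding f_def by linarith
  qed
  have fint: "set_integrable lborel {0..x} f" for x
    by (rule set_int_bounded[OF fmeas fbound]) auto
  have fI: "f integrable_on {0..x}" for x using set_borel_integral_eq_integral(1)[OF fint] .
  have fL: "(LINT t:{0..x}|lborel. f t) = integral {0..x} f" for x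
    using set_borel_integral_eq_integral(2)[OF fint] .
  define Fh where "Fh x = integral {0..x} f" for x
  have Fcont0: "continuous_on {0..1} Fh"
    unfolding Fh_def by (rule indefinite_integral_continuous_1[OF fI])
  have Fcont: "continuous_on {0..1} (\<lambda>x. \<bar>Fh x\<bar>)" using Fcont0 by (intro continuous_intros)
  have W1: "W_norm f = (LINT x:{0..1}|lborel. \<bar>Fh x\<bar>)"
    unfolding W_norm_def Fh_def fL by simp
  have W2: "(LINT x:{0..1}|lborel. \<bar>Fh x\<bar>) = integral {0..1} (\<lambda>x. \<bar>Fh x\<bar>)"
    using set_borel_integral_eq_integral(2)[OF borel_integrable_atLeastAtMost'[OF Fcont]] .
  have Fhint: "(\<lambda>x. \<bar>Fh x\<bar>) integrable_on {0..1}" using integrable_continuous_interval[OF Fcont] .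
  have f_on: "f t = g t - m k" if "k < N" "a k \<le> t" "t < a (Suc k)" for k t
    unfolding f_def using proj_cell[OF that(1) ico_cell[OF that]] by simp
  have cellint_f_zero: "integral {a j..a (Suc j)} f = 0" if "j < N" for j
  proof -
    have "integral {a j..a (Suc j)} f = integral {a j..a (Suc j)} (\<lambda>t. g t - m j)"
      by (rule integral_spike[where S="{a (Suc j)}"]) (use f_on[OF that] in auto)
    also have "\<dots> = integral {a j..a (Suc j)} g - integral {a j..a (Suc j)} (\<lambda>_. m j)"
      by (rule integral_diff[OF gI]) auto
    also have "\<dots> = 0" using m_eq[OF that] apos[of j] by (simp add: less_imp_le)
    finally show ?thesis .
  qed
  have f_before: "integral {0..a k} f = 0" if "k \<le> N" for k
    using sum_cells[OF N fI[of 1] that] cellint_f_zero that by (simp add: a_def)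
  have Fh_cell: "Fh x = integral {a k..x} (\<lambda>t. g t - m k)" if "k < N" "a k \<le> x" "x \<le> a (Suc k)" for k x
  proof -
    have "Fh x = integral {0..a k} f + integral {a k..x} f"
      unfolding Fh_def
      by (rule Henstock_Kurzweil_Integration.integral_combine[symmetric]) (use that fI amono[of 0 k] a0 in auto)
    also have "integral {a k..x} f = integral {a k..x} (\<lambda>t. g t - m k)"
      by (rule integral_spike[where S="{a (Suc k)}"]) (use f_on[OF that(1)] that in auto)
    finally show ?thesis using f_before that by simp
  qed
  have cell_bound: "integral {a k..a (Suc k)} (\<lambda>x. \<bar>Fh x\<bar>)
      \<le> (if k \<in> S then (1 / real N)^2 / 8 * var_on (ulam_cell N k) g else 0)" if k: "k < N" for k
  proof -
    have "integral {a k..a (Suc k)} (\<lambda>x. \<bar>Fh x\<bar>)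
       = integral {a k..a (Suc k)} (\<lambda>x. \<bar>integral {a k..x} (\<lambda>t. g t - integral {a k..a (Suc k)} g / (a (Suc k) - a k))\<bar>)"
      by (rule integral_cong) (simp add: Fh_cell[OF k] m_eq[OF k])
    also have "\<dots> \<le> (if k \<in> S then (1 / real N)^2 / 8 * var_on (ulam_cell N k) g else 0)"
    proof (cases "k \<in> S")
      case True
      define V where "V x = (if x < a (Suc k) then vfun (ulam_cell N k) g x else 0)" for x
      have "integral {a k..a (Suc k)} (\<lambda>x. \<bar>integral {a k..x} (\<lambda>t. g t - integral {a k..a (Suc k)} g / (a (Suc k) - a k))\<bar>)
          \<le> (a (Suc k) - a k)^2 / 8 * var_on (ulam_cell N k) g"
      proof (rule cell_core[where V=V])
        show "a k < a (Suc k)" by (rule apos)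
        show "mono_on {a k..<a (Suc k)} (\<lambda>x. V x + g x)"
        proof (rule mono_onI)
          fix r s assume rs: "r \<in> {a k..<a (Suc k)}" "s \<in> {a k..<a (Suc k)}" "r \<le> s"
          then show "V r + g r \<le> V s + g s"
            using mono_onD[OF vfun_mono_plus[OF bddk[OF True]] ico_cell[OF k] ico_cell[OF k]] by (auto simp: V_def)
        qed
        show "mono_on {a k..<a (Suc k)} (\<lambda>x. V x - g x)"
        proof (rule mono_onI)
          fix r s assume rs: "r \<in> {a k..<a (Suc k)}" "s \<in> {a k..<a (Suc k)}" "r \<le> s"
          then show "V r - g r \<le> V s - g s"
            using mono_onD[OF vfun_mono_minus[OF bddk[OF True]] ico_cell[OF k] ico_cell[OF k]] by (auto simp: V_def)
        qed
        fix x assume x: "x \<in> {a k..a (Suc k)}"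
        show "0 \<le> V x" using vfun_nonneg[OF bddk[OF True] ico_cell[OF k]] x by (auto simp: V_def)
        show "V x \<le> var_on (ulam_cell N k) g"
          using vfun_le[OF bddk[OF True] ico_cell[OF k]] x varnn[OF True] by (auto simp: V_def)
      qed
      then show ?thesis using True by (simp add: adiff)
    next
      case False
      have "integral {a k..a (Suc k)} (\<lambda>x. \<bar>integral {a k..x} (\<lambda>t. g t - integral {a k..a (Suc k)} g / (a (Suc k) - a k))\<bar>)
          \<le> (a (Suc k) - a k)^2 / 8 * 0"
      proof (rule cell_core[where V="\<lambda>_. 0"])
        show "a k < a (Suc k)" by (rule apos)
        show "mono_on {a k..<a (Suc k)} (\<lambda>x. 0 + g x)"
          by (rule mono_onI) (use gz[OF k False ico_cell[OF k]] in auto)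
        show "mono_on {a k..<a (Suc k)} (\<lambda>x. 0 - g x)"
          by (rule mono_onI) (use gz[OF k False ico_cell[OF k]] in auto)
      qed auto
      then show ?thesis using False by simp
    qed
    finally show ?thesis .
  qed
  have "W_norm (\<lambda>x. g x - ulam_proj N g x) = integral {0..1} (\<lambda>x. \<bar>Fh x\<bar>)"
    using W1 W2 by (simp add: f_def)
  also have "\<dots> = (\<Sum>k<N. integral {a k..a (Suc k)} (\<lambda>x. \<bar>Fh x\<bar>))"
    using sum_cells[OF N Fhint order_refl] N by (simp add: a_def)
  also have "\<dots> \<le> (\<Sum>k<N. (if k \<in> S then (1 / real N)^2 / 8 * var_on (ulam_cell N k) g else 0))"
    by (rule sum_mono) (use cell_bound in auto)
  also have "\<dots> = (\<Sum>k\<in>{..<N} \<inter> S. (1 / real N)^2 / 8 * var_on (ulam_cell N k) g)"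
    by (rule sum.inter_restrict[symmetric]) simp
  also have "{..<N} \<inter> S = S" using assms(2) by auto
  finally show ?thesis by (simp add: sum_distrib_left)
qed

end
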